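(* Let $G=(V,E)$ be an $S$-regular graph on $n$ vertices with cells $V_1,\dots,V_k$, $n_i=|V_i|$, and let $B,C\subseteq V$. Write $B_i=B\cap V_i$, $C_j=C\cap V_j$, $c_i=|C_i|/n_i$ and $b=|B|/n$. Then \[\Bigl|\,|E(B,C)|-\sum_{i=1}^k\sum_{j=1}^k\sqrt{\tfrac{s_{ij}s_{ji}}{n_in_j}}\,|B_i||C_j|\,\Bigr|\le\lambda_B\, n\Bigl(b\sum_{i=1}^k c_i(1-c_i)\Bigr)^{1/2}.\]
   Context: All graphs are simple, undirected and connected. $G$ is $S$-regular ($S=(s_{ij})$ a $k\times k$ nonnegative integer matrix) if $V$ is partitioned into nonempty cells $V_1,\dots,V_k$ such that every vertex of $V_i$ has exactly $s_{ij}$ neighbours in $V_j$. $|E(B,C)|$ denotes the number of pairs $(u,v)\in B\times C$ with $uv\in E$ (i.e. $\mathbf{1}_B^TA\mathbf{1}_C$, $A$ the adjacency matrix). The subspace $W=\mathrm{span}\{\mathbf{1}_{V_1},\dots,\mathbf{1}_{V_k}\}$ is $A$-invariant with eigenvalues on $W$ equal to those of $S$; the eigenvalues of $A$ on $W^\perp$ are the bulk eigenvalues (assume $n>k$), and $\lambda_B$ is the largest absolute value of a bulk eigenvalue. *)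

theory Defs
  imports Complex_Main
begin

definition simple_graph :: "'a set \<Rightarrow> ('a \<Rightarrow> 'a \<Rightarrow> bool) \<Rightarrow> bool" where
  "simple_graph V E \<longleftrightarrow> finite V \<and> (\<forall>u v. E u v \<longrightarrow> u \<in> V \<and> v \<in> V)
     \<and> (\<forall>u v. E u v \<longrightarrow> E v u) \<and> (\<forall>u. \<not> E u u)"

definition connected_graph :: "'a set \<Rightarrow> ('a \<Rightarrow> 'a \<Rightarrow> bool) \<Rightarrow> bool" where
  "connected_graph V E \<longleftrightarrow> (\<forall>u\<in>V. \<forall>v\<in>V. E\<^sup>*\<^sup>* u v)"

definition S_regular :: "'a set \<Rightarrow> ('a \<Rightarrow> 'a \<Rightarrow> bool) \<Rightarrow> nat \<Rightarrow> (nat \<Rightarrow> 'a set)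
    \<Rightarrow> (nat \<Rightarrow> nat \<Rightarrow> nat) \<Rightarrow> bool" where
  "S_regular V E k P S \<longleftrightarrow>
     (\<forall>i<k. P i \<noteq> {} \<and> P i \<subseteq> V) \<and>
     (\<forall>i<k. \<forall>j<k. i \<noteq> j \<longrightarrow> P i \<inter> P j = {}) \<and>
     V = (\<Union>i<k. P i) \<and>
     (\<forall>i<k. \<forall>j<k. \<forall>v\<in>P i. card {u \<in> P j. E v u} = S i j)"

definition adj_apply :: "'a set \<Rightarrow> ('a \<Rightarrow> 'a \<Rightarrow> bool) \<Rightarrow> ('a \<Rightarrow> real) \<Rightarrow> 'a \<Rightarrow> real" where
  "adj_apply V E x v = (\<Sum>u\<in>V. if E v u then x u else 0)"

text \<open>Bulk eigenvalue: eigenvalue of A restricted to W-perp, where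
  W = span of the cell indicator vectors.\<close>

definition bulk_eigenvalue :: "'a set \<Rightarrow> ('a \<Rightarrow> 'a \<Rightarrow> bool) \<Rightarrow> nat \<Rightarrow> (nat \<Rightarrow> 'a set)
    \<Rightarrow> real \<Rightarrow> bool" where
  "bulk_eigenvalue V E k P \<mu> \<longleftrightarrow>
     (\<exists>x :: 'a \<Rightarrow> real. (\<forall>v. v \<notin> V \<longrightarrow> x v = 0) \<and> (\<exists>v\<in>V. x v \<noteq> 0) \<and>
        (\<forall>i<k. (\<Sum>v\<in>P i. x v) = 0) \<and>
        (\<forall>v\<in>V. adj_apply V E x v = \<mu> * x v))"

definition lambda_B :: "'a set \<Rightarrow> ('a \<Rightarrow> 'a \<Rightarrow> bool) \<Rightarrow> nat \<Rightarrow> (nat \<Rightarrow> 'a set) \<Rightarrow> real" where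
  "lambda_B V E k P = Max {\<bar>\<mu>\<bar> | \<mu>. bulk_eigenvalue V E k P \<mu>}"

definition edge_count :: "('a \<Rightarrow> 'a \<Rightarrow> bool) \<Rightarrow> 'a set \<Rightarrow> 'a set \<Rightarrow> nat" where
  "edge_count E B C = card {(u, v). u \<in> B \<and> v \<in> C \<and> E u v}"

end

theory Submission
  imports Defs "HOL-Analysis.Analysis"
begin


definition ip :: "'a set \<Rightarrow> ('a \<Rightarrow> real) \<Rightarrow> ('a \<Rightarrow> real) \<Rightarrow> real" where
  "ip V x y = (\<Sum>v\<in>V. x v * y v)"

lemma quad_zero:
  fixes a c :: real
  assumes "\<And>t. a * t + c * t^2 \<le> 0"
  shows "a = 0"
proof (rule ccontr)
  assume a: "a \<noteq> 0"
  define t where "t = a / (2 * (\<bar>c\<bar> + 1))"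
  have d: "2 * (\<bar>c\<bar> + 1) > 0" by simp
  have h1: "\<bar>c * t\<bar> \<le> \<bar>a\<bar> / 2"
  proof -
    have "\<bar>c * t\<bar> = \<bar>c\<bar> * \<bar>a\<bar> / (2 * (\<bar>c\<bar> + 1))" unfolding t_def using d
      by (simp add: abs_mult abs_divide)
    also have "\<dots> \<le> (\<bar>c\<bar> + 1) * \<bar>a\<bar> / (2 * (\<bar>c\<bar> + 1))"
      using d by (intro divide_right_mono mult_right_mono) auto
    also have "\<dots> = \<bar>a\<bar> / 2" using d by (simp add: field_simps)
    finally show ?thesis .
  qed
  have e: "a * t + c * t^2 = t * (a + c * t)" by (simp add: power2_eq_square algebra_simps)
  have "t * (a + c * t) > 0"
  proof (cases "a > 0")
    case True
    then have "t > 0" unfolding t_def using d by simp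
    moreover have "a + c * t > 0" using h1 True by linarith
    ultimately show ?thesis by simp
  next
    case False
    then have "a < 0" using a by simp
    then have "t < 0" unfolding t_def using d by (simp add: divide_neg_pos)
    moreover have "a + c * t < 0" using h1 \<open>a < 0\<close> by linarith
    ultimately show ?thesis by (simp add: mult_neg_neg)
  qed
  with assms[of t] e show False by linarith
qed

locale SR =
  fixes V :: "'a set" and E :: "'a \<Rightarrow> 'a \<Rightarrow> bool" and k :: nat
    and P :: "nat \<Rightarrow> 'a set" and S :: "nat \<Rightarrow> nat \<Rightarrow> nat"
  assumes sg: "simple_graph V E" and sr: "S_regular V E k P S"
begin

lemma finV: "finite V" using sg by (simp add: simple_graph_def)
lemma Esym: "E u v \<Longrightarrow> E v u" using sg by (simp add: simple_graph_def)
lemma EV: "E u v \<Longrightarrow> u \<in> V \<and> v \<in> V" using sg by (simp add: simple_graph_def)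
lemma Pne: "i < k \<Longrightarrow> P i \<noteq> {}" using sr by (simp add: S_regular_def)
lemma PV: "i < k \<Longrightarrow> P i \<subseteq> V" using sr unfolding S_regular_def by blast
lemma Pdisj: "i < k \<Longrightarrow> j < k \<Longrightarrow> i \<noteq> j \<Longrightarrow> P i \<inter> P j = {}" using sr by (simp add: S_regular_def)
lemma Vcov: "V = (\<Union>i<k. P i)" using sr by (simp add: S_regular_def)
lemma Sdeg: "i < k \<Longrightarrow> j < k \<Longrightarrow> v \<in> P i \<Longrightarrow> card {u \<in> P j. E v u} = S i j"
  using sr by (simp add: S_regular_def)
lemma finP: "i < k \<Longrightarrow> finite (P i)" using PV finV finite_subset by blast
lemma cardP: "i < k \<Longrightarrow> card (P i) > 0" using finP Pne by (simp add: card_gt_0_iff)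

lemma sum_cells: "(\<Sum>v\<in>V. f v) = (\<Sum>i<k. \<Sum>v\<in>P i. f v)"
proof -
  have "(\<Sum>v\<in>V. f v) = sum f (\<Union>(P ` {..<k}))" using Vcov by simp
  also have "\<dots> = (\<Sum>i<k. sum f (P i))"
    by (rule sum.UNION_disjoint) (auto simp: finP dest: Pdisj)
  finally show ?thesis .
qed

lemma cell_unique: "j < k \<Longrightarrow> v \<in> P j \<Longrightarrow> i < k \<Longrightarrow> v \<in> P i \<longleftrightarrow> i = j"
  using Pdisj by blast

lemma cellval: assumes "j < k" "v \<in> P j"
  shows "(\<Sum>i<k. if v \<in> P i then f i else (0::real)) = f j"
proof -
  have "(\<Sum>i<k. if v \<in> P i then f i else (0::real)) = (\<Sum>i<k. if i = j then f i else 0)"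
    by (rule sum.cong) (use cell_unique[OF assms] in auto)
  also have "\<dots> = f j" using assms by simp
  finally show ?thesis .
qed

lemma L1: assumes "i < k"
  shows "(\<Sum>u\<in>P i. adj_apply V E y u) = (\<Sum>j<k. real (S j i) * (\<Sum>v\<in>P j. y v))"
proof -
  have "(\<Sum>u\<in>P i. adj_apply V E y u) = (\<Sum>u\<in>P i. \<Sum>v\<in>V. if E u v then y v else 0)"
    by (simp add: adj_apply_def)
  also have "\<dots> = (\<Sum>v\<in>V. \<Sum>u\<in>P i. if E u v then y v else 0)" by (rule sum.swap)
  also have "\<dots> = (\<Sum>v\<in>V. y v * real (card {u \<in> P i. E v u}))"
  proof (rule sum.cong[OF refl])
    fix v assume "v \<in> V"
    have eq: "{u \<in> P i. E u v} = {u \<in> P i. E v u}" using Esym by blast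
    have "(\<Sum>u\<in>P i. if E u v then y v else 0) = (\<Sum>u\<in>{u \<in> P i. E u v}. y v)"
      by (simp only: sum.inter_filter[OF finP[OF assms]])
    also have "\<dots> = (\<Sum>u\<in>{u \<in> P i. E v u}. y v)" by (simp only: eq)
    finally show "(\<Sum>u\<in>P i. if E u v then y v else 0) = y v * real (card {u \<in> P i. E v u})"
      by (simp add: eq)
  qed
  also have "\<dots> = (\<Sum>j<k. \<Sum>v\<in>P j. y v * real (card {u \<in> P i. E v u}))" by (rule sum_cells)
  also have "\<dots> = (\<Sum>j<k. \<Sum>v\<in>P j. y v * real (S j i))"
    by (intro sum.cong refl) (simp add: Sdeg assms)
  also have "\<dots> = (\<Sum>j<k. real (S j i) * (\<Sum>v\<in>P j. y v))"
    by (intro sum.cong refl) (metis sum_distrib_right mult.commute)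
  finally show ?thesis .
qed

end



context SR begin

definition inW :: "('a \<Rightarrow> real) \<Rightarrow> bool" where
  "inW x \<longleftrightarrow> (\<forall>v. v \<notin> V \<longrightarrow> x v = 0) \<and> (\<forall>i<k. (\<Sum>v\<in>P i. x v) = 0)"

definition bf :: "('a \<Rightarrow> real) \<Rightarrow> ('a \<Rightarrow> real) \<Rightarrow> real" where
  "bf x y = ip V x (adj_apply V E y)"

lemma adj_lin: "adj_apply V E (\<lambda>u. x u + c * y u) v = adj_apply V E x v + c * adj_apply V E y v"
proof -
  have "adj_apply V E (\<lambda>u. x u + c * y u) v
      = (\<Sum>u\<in>V. (if E v u then x u else 0) + c * (if E v u then y u else 0))"
    unfolding adj_apply_def by (intro sum.cong refl) simp
  then show ?thesis by (simp add: adj_apply_def sum.distrib sum_distrib_left)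
qed

lemma adj_lin_fun: "adj_apply V E (\<lambda>u. x u + c * y u) = (\<lambda>v. adj_apply V E x v + c * adj_apply V E y v)"
  by (rule ext) (rule adj_lin)

lemma ip_lin1: "ip V (\<lambda>v. x v + c * y v) z = ip V x z + c * ip V y z"
  by (simp add: ip_def algebra_simps sum.distrib sum_distrib_left)
lemma ip_sym: "ip V x y = ip V y x"
  by (simp add: ip_def mult.commute)
lemma ip_lin2: "ip V z (\<lambda>v. x v + c * y v) = ip V z x + c * ip V z y"
  by (simp add: ip_def algebra_simps sum.distrib sum_distrib_left)
lemma ip_scale1: "ip V (\<lambda>v. c * x v) z = c * ip V x z"
  by (simp add: ip_def algebra_simps sum_distrib_left)

lemma ip_scale2: "ip V z (\<lambda>v. c * x v) = c * ip V z x"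
  by (simp add: ip_def algebra_simps sum_distrib_left)

lemma bf_sym: "bf x y = bf y x"
proof -
  have "bf x y = (\<Sum>u\<in>V. \<Sum>v\<in>V. if E u v then x u * y v else 0)"
    unfolding bf_def ip_def adj_apply_def by (auto simp: sum_distrib_left intro!: sum.cong)
  also have "\<dots> = (\<Sum>v\<in>V. \<Sum>u\<in>V. if E u v then x u * y v else 0)" by (rule sum.swap)
  also have "\<dots> = (\<Sum>v\<in>V. \<Sum>u\<in>V. if E v u then y v * x u else 0)"
    by (intro sum.cong refl) (auto dest: Esym simp: mult.commute)
  also have "\<dots> = bf y x"
    unfolding bf_def ip_def adj_apply_def by (auto simp: sum_distrib_left intro!: sum.cong)
  finally show ?thesis .
qed

lemma bf_lin1: "bf (\<lambda>v. x v + c * y v) z = bf x z + c * bf y z"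
  by (simp add: bf_def ip_lin1)
lemma bf_lin2: "bf z (\<lambda>v. x v + c * y v) = bf z x + c * bf z y"
proof -
  have "bf z (\<lambda>v. x v + c * y v) = ip V z (\<lambda>v. adj_apply V E x v + c * adj_apply V E y v)"
    unfolding bf_def by (simp only: adj_lin_fun)
  then show ?thesis by (simp add: ip_lin2 bf_def)
qed
lemma bf_scale1: "bf (\<lambda>v. c * x v) z = c * bf x z"
  by (simp add: bf_def ip_scale1)

lemma bf_scale2: "bf z (\<lambda>v. c * x v) = c * bf z x"
  using bf_lin2[of z "\<lambda>v. 0" c x] by (simp add: bf_def ip_def adj_apply_def)

lemma bf_expand: "bf (\<lambda>v. x v + c * y v) (\<lambda>v. x v + c * y v) = bf x x + 2 * c * bf y x + c^2 * bf y y"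
  by (simp add: bf_lin1 bf_lin2 bf_sym[of x y] algebra_simps power2_eq_square)
lemma ip_expand: "ip V (\<lambda>v. x v + c * y v) (\<lambda>v. x v + c * y v) = ip V x x + 2 * c * ip V y x + c^2 * ip V y y"
  by (simp add: ip_lin1 ip_lin2 ip_sym[of x y] algebra_simps power2_eq_square)

lemma inW_lin: "inW x \<Longrightarrow> inW y \<Longrightarrow> inW (\<lambda>v. x v + c * y v)"
  by (simp add: inW_def sum.distrib sum_distrib_left[symmetric])
lemma inW_scale: "inW x \<Longrightarrow> inW (\<lambda>v. c * x v)"
  by (simp add: inW_def sum_distrib_left[symmetric])

definition Aop :: "('a \<Rightarrow> real) \<Rightarrow> 'a \<Rightarrow> real" where
  "Aop x v = (if v \<in> V then adj_apply V E x v else 0)"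

lemma inW_Aop: assumes "inW x" shows "inW (Aop x)"
  unfolding inW_def
proof (intro conjI allI impI)
  fix v assume "v \<notin> V" then show "Aop x v = 0" by (simp add: Aop_def)
next
  fix i assume i: "i < k"
  have "(\<Sum>v\<in>P i. Aop x v) = (\<Sum>v\<in>P i. adj_apply V E x v)"
    using PV[OF i] by (intro sum.cong refl) (auto simp: Aop_def)
  also have "\<dots> = 0" using L1[OF i] assms by (simp add: inW_def)
  finally show "(\<Sum>v\<in>P i. Aop x v) = 0" .
qed

lemma ip_Aop: "ip V z (Aop x) = bf z x"
  unfolding bf_def ip_def Aop_def by (intro sum.cong refl) simp

lemma ip_nonneg: "ip V x x \<ge> 0"
  unfolding ip_def by (intro sum_nonneg) simp

lemma ip_zero: assumes "ip V x x = 0" "v \<in> V" shows "x v = 0"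
proof -
  have "\<forall>v\<in>V. x v * x v = 0"
    using assms(1) finV unfolding ip_def by (subst sum_nonneg_eq_0_iff[symmetric]) auto
  then show ?thesis using assms(2) by simp
qed

lemma bf_zero_left: "(\<And>v. v \<in> V \<Longrightarrow> x v = 0) \<Longrightarrow> bf x y = 0"
  unfolding bf_def ip_def by simp

lemma eig_lemma:
  assumes "inW x0" "\<exists>v\<in>V. x0 v \<noteq> 0" "\<And>z. inW z \<Longrightarrow> bf z x0 = \<mu> * ip V z x0"
  shows "bulk_eigenvalue V E k P \<mu>"
proof -
  define z where "z = (\<lambda>v. Aop x0 v + (- \<mu>) * x0 v)"
  have zW: "inW z" unfolding z_def by (intro inW_lin inW_Aop assms(1))
  have "ip V z z = ip V z (Aop x0) + (- \<mu>) * ip V z x0"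
    using ip_lin2[of z "Aop x0" "- \<mu>" x0] by (simp only: z_def[symmetric])
  also have "\<dots> = 0" using assms(3)[OF zW] by (simp add: ip_Aop)
  finally have "ip V z z = 0" .
  then have "\<forall>v\<in>V. z v = 0" using ip_zero by blast
  then have "\<forall>v\<in>V. adj_apply V E x0 v = \<mu> * x0 v" by (simp add: z_def Aop_def)
  then show ?thesis unfolding bulk_eigenvalue_def using assms(1,2) by (auto simp: inW_def)
qed

lemma ext_lemma:
  assumes "inW x0" "ip V x0 x0 = 1" "\<sigma> \<noteq> 0"
    and ext: "\<And>x. inW x \<Longrightarrow> \<sigma> * bf x x \<le> \<sigma> * bf x0 x0 * ip V x x"
  shows "bulk_eigenvalue V E k P (bf x0 x0)"
proof (rule eig_lemma[OF assms(1)])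
  show "\<exists>v\<in>V. x0 v \<noteq> 0"
  proof (rule ccontr)
    assume "\<not> (\<exists>v\<in>V. x0 v \<noteq> 0)"
    then have "ip V x0 x0 = 0" unfolding ip_def by simp
    with assms(2) show False by simp
  qed
next
  fix z assume zW: "inW z"
  define \<mu> where "\<mu> = bf x0 x0"
  have "\<sigma> * 2 * (bf z x0 - \<mu> * ip V z x0) = 0"
  proof (rule quad_zero)
    fix t
    have "\<sigma> * bf (\<lambda>v. x0 v + t * z v) (\<lambda>v. x0 v + t * z v) \<le> \<sigma> * \<mu> * ip V (\<lambda>v. x0 v + t * z v) (\<lambda>v. x0 v + t * z v)"
      unfolding \<mu>_def by (rule ext) (intro inW_lin assms(1) zW)
    then have "\<sigma> * (\<mu> + 2 * t * bf z x0 + t^2 * bf z z) \<le> \<sigma> * \<mu> * (1 + 2 * t * ip V z x0 + t^2 * ip V z z)"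
      by (simp only: bf_expand ip_expand assms(2) flip: \<mu>_def)
    moreover have "\<sigma> * 2 * (bf z x0 - \<mu> * ip V z x0) * t + \<sigma> * (bf z z - \<mu> * ip V z z) * t^2
       = \<sigma> * (\<mu> + 2 * t * bf z x0 + t^2 * bf z z) - \<sigma> * \<mu> * (1 + 2 * t * ip V z x0 + t^2 * ip V z z)"
      by (simp add: algebra_simps)
    ultimately show "\<sigma> * 2 * (bf z x0 - \<mu> * ip V z x0) * t + \<sigma> * (bf z z - \<mu> * ip V z z) * t^2 \<le> 0"
      by linarith
  qed
  then show "bf z x0 = bf x0 x0 * ip V z x0" using assms(3) by (simp add: \<mu>_def)
qed

end



context SR begin

lemma W_nonempty:
  assumes "card V > k"
  shows "\<exists>x. inW x \<and> ip V x x = 1"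
proof -
  have "\<exists>i<k. card (P i) \<ge> 2"
  proof (rule ccontr)
    assume "\<not> ?thesis"
    then have h: "\<forall>i<k. card (P i) \<le> 1" by auto
    have "card V \<le> (\<Sum>i<k. card (P i))" by (subst Vcov) (rule card_UN_le, simp)
    also have "\<dots> \<le> (\<Sum>i<k. 1)" using h by (intro sum_mono) auto
    finally show False using assms by simp
  qed
  then obtain i where i: "i < k" "card (P i) \<ge> 2" by blast
  obtain a where a: "a \<in> P i" using Pne[OF i(1)] by blast
  have "card (P i - {a}) = card (P i) - 1" using a finP[OF i(1)] by (simp add: card_Diff_singleton)
  then have "card (P i - {a}) \<ge> 1" using i(2) by linarith
  then have "P i - {a} \<noteq> {}" by (metis card.empty not_one_le_zero)
  then obtain b where b: "b \<in> P i" "b \<noteq> a" by blast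
  define y where "y = (\<lambda>v. (if v = a then 1 else 0) + (- 1) * (if v = b then (1::real) else 0))"
  have aV: "a \<in> V" and bV: "b \<in> V" using a b PV[OF i(1)] by auto
  have yW: "inW y" unfolding inW_def
  proof (intro conjI allI impI)
    fix v assume "v \<notin> V" then show "y v = 0" using aV bV by (auto simp: y_def)
  next
    fix j assume j: "j < k"
    have "(\<Sum>v\<in>P j. y v) = (\<Sum>v\<in>P j. if v = a then 1 else 0) + (\<Sum>v\<in>P j. (- 1) * (if v = b then (1::real) else 0))"
      unfolding y_def by (rule sum.distrib)
    also have "\<dots> = (if a \<in> P j then 1 else 0) + (- 1) * (if b \<in> P j then 1 else 0)"
      by (simp only: sum_distrib_left[symmetric] sum.delta[OF finP[OF j]])
    also have "a \<in> P j \<longleftrightarrow> b \<in> P j" using cell_unique[OF i(1) a j] cell_unique[OF i(1) b(1) j] by simp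
    finally show "(\<Sum>v\<in>P j. y v) = 0" by simp
  qed
  have "ip V y y \<ge> y a * y a" unfolding ip_def
    by (rule member_le_sum) (simp_all add: aV finV)
  moreover have "y a = 1" using b(2) by (simp add: y_def)
  ultimately have pos: "ip V y y > 0" by simp
  define x where "x = (\<lambda>v. (1 / sqrt (ip V y y)) * y v)"
  have "inW x" unfolding x_def by (rule inW_scale[OF yW])
  moreover have "ip V x x = 1"
  proof -
    have "ip V x x = (1 / sqrt (ip V y y)) * ((1 / sqrt (ip V y y)) * ip V y y)"
      unfolding x_def by (simp only: ip_scale1 ip_scale2)
    also have "\<dots> = ip V y y / (sqrt (ip V y y))^2" by (simp add: power2_eq_square)
    also have "\<dots> = 1" using pos by simp
    finally show ?thesis .
  qed
  ultimately show ?thesis by blast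
qed

lemma cont_adj: "continuous_on UNIV (\<lambda>x. adj_apply V E x u)"
  unfolding adj_apply_def
proof (intro continuous_on_sum)
  fix v show "continuous_on UNIV (\<lambda>x::'a \<Rightarrow> real. if E u v then x v else 0)"
    by (cases "E u v") auto
qed

lemma cont_q: "continuous_on UNIV (\<lambda>x. bf x x)"
  unfolding bf_def ip_def
  by (intro continuous_on_sum continuous_on_mult continuous_on_product_coordinates cont_adj)

lemma compact_K: "compact {x. inW x \<and> ip V x x = 1}"
proof -
  define K0 where "K0 = PiE UNIV (\<lambda>v. if v \<in> V then {-1..1::real} else {0})"
  have "compactin (product_topology (\<lambda>_. euclidean) UNIV) K0"
    unfolding K0_def by (subst compactin_PiE) auto
  then have cK0: "compact K0" by (simp add: euclidean_product_topology)
  define C where "C = (\<Inter>i\<in>{..<k}. {x::'a\<Rightarrow>real. (\<Sum>v\<in>P i. x v) = 0}) \<inter> {x. ip V x x = 1}"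
  have "closed C" unfolding C_def ip_def
    by (intro closed_Int closed_INT ballI closed_Collect_eq continuous_on_sum continuous_on_mult
        continuous_on_product_coordinates continuous_on_const)
  then have "compact (K0 \<inter> C)" using cK0 by auto
  moreover have "K0 \<inter> C = {x. inW x \<and> ip V x x = 1}"
  proof (intro set_eqI iffI)
    fix x assume "x \<in> K0 \<inter> C"
    then show "x \<in> {x. inW x \<and> ip V x x = 1}"
      unfolding K0_def C_def inW_def by (auto simp: PiE_iff split: if_splits)
  next
    fix x assume x: "x \<in> {x. inW x \<and> ip V x x = 1}"
    have "\<bar>x v\<bar> \<le> 1" if "v \<in> V" for v
    proof -
      have "x v * x v \<le> ip V x x" unfolding ip_def using that finV
        by (intro member_le_sum) auto
      then have "(x v)^2 \<le> 1" using x by (simp add: power2_eq_square)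
      then show ?thesis by (simp add: abs_square_le_1)
    qed
    then show "x \<in> K0 \<inter> C" using x unfolding K0_def C_def inW_def
      by (auto simp: PiE_iff abs_le_iff)
  qed
  ultimately show ?thesis by simp
qed

lemma scale_bound:
  assumes K: "\<And>y. inW y \<Longrightarrow> ip V y y = 1 \<Longrightarrow> \<sigma> * bf y y \<le> \<sigma> * m" and xW: "inW x"
  shows "\<sigma> * bf x x \<le> \<sigma> * m * ip V x x"
proof (cases "ip V x x = 0")
  case True
  then have "bf x x = 0" using ip_zero by (intro bf_zero_left) blast
  then show ?thesis using True by simp
next
  case False
  then have pos: "ip V x x > 0" using ip_nonneg[of x] by simp
  define c where "c = 1 / sqrt (ip V x x)"
  have c2: "c * c * ip V x x = 1" unfolding c_def using pos by (simp add: field_simps)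
  define y where "y = (\<lambda>v. c * x v)"
  have "inW y" unfolding y_def by (rule inW_scale[OF xW])
  moreover have "ip V y y = 1" unfolding y_def using c2 by (simp add: ip_scale1 ip_scale2)
  ultimately have "\<sigma> * bf y y \<le> \<sigma> * m" by (rule K)
  moreover have "bf y y = c * c * bf x x" unfolding y_def by (simp only: bf_scale1 bf_scale2 mult.assoc)
  ultimately have "\<sigma> * (c * c * bf x x) \<le> \<sigma> * m" by simp
  then have "ip V x x * (\<sigma> * (c * c * bf x x)) \<le> ip V x x * (\<sigma> * m)"
    by (rule mult_left_mono) (use pos in auto)
  moreover have "ip V x x * (\<sigma> * (c * c * bf x x)) = \<sigma> * bf x x"
    using c2 by (simp add: algebra_simps)
  ultimately have "\<sigma> * bf x x \<le> ip V x x * (\<sigma> * m)" by linarith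
  then show ?thesis by (simp add: mult.commute)
qed

lemma extremal:
  assumes "card V > k"
  shows "\<exists>M m. bulk_eigenvalue V E k P M \<and> bulk_eigenvalue V E k P m \<and>
     (\<forall>x. inW x \<longrightarrow> m * ip V x x \<le> bf x x \<and> bf x x \<le> M * ip V x x)"
proof -
  define K where "K = {x. inW x \<and> ip V x x = 1}"
  have cK: "compact K" and neK: "K \<noteq> {}" using compact_K W_nonempty[OF assms] by (auto simp: K_def)
  have cq: "continuous_on K (\<lambda>x. bf x x)" by (rule continuous_on_subset[OF cont_q]) simp
  obtain xM where xM: "xM \<in> K" "\<And>y. y \<in> K \<Longrightarrow> bf y y \<le> bf xM xM"
    using continuous_attains_sup[OF cK neK cq] by blast
  obtain xm where xm: "xm \<in> K" "\<And>y. y \<in> K \<Longrightarrow> bf xm xm \<le> bf y y"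
    using continuous_attains_inf[OF cK neK cq] by blast
  have bM: "\<And>x. inW x \<Longrightarrow> 1 * bf x x \<le> 1 * bf xM xM * ip V x x"
    by (rule scale_bound) (use xM in \<open>auto simp: K_def\<close>)
  have bm: "\<And>x. inW x \<Longrightarrow> (-1) * bf x x \<le> (-1) * bf xm xm * ip V x x"
    by (rule scale_bound) (use xm in \<open>auto simp: K_def\<close>)
  have "bulk_eigenvalue V E k P (bf xM xM)"
    by (rule ext_lemma[of xM 1]) (use xM bM in \<open>auto simp: K_def\<close>)
  moreover have "bulk_eigenvalue V E k P (bf xm xm)"
    by (rule ext_lemma[of xm "-1"]) (use xm bm in \<open>auto simp: K_def\<close>)
  moreover have "\<forall>x. inW x \<longrightarrow> bf xm xm * ip V x x \<le> bf x x \<and> bf x x \<le> bf xM xM * ip V x x"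
    using bM bm by auto
  ultimately show ?thesis by blast
qed

end



context SR begin

definition eigv :: "('a \<Rightarrow> real) \<Rightarrow> real \<Rightarrow> bool" where
  "eigv x \<mu> \<longleftrightarrow> inW x \<and> ip V x x = 1 \<and> (\<forall>v\<in>V. adj_apply V E x v = \<mu> * x v)"

lemma bulk_eigv: assumes "bulk_eigenvalue V E k P \<mu>" shows "\<exists>x. eigv x \<mu>"
proof -
  obtain y where y: "\<forall>v. v \<notin> V \<longrightarrow> y v = 0" "\<exists>v\<in>V. y v \<noteq> 0"
     "\<forall>i<k. (\<Sum>v\<in>P i. y v) = 0" "\<forall>v\<in>V. adj_apply V E y v = \<mu> * y v"
    using assms unfolding bulk_eigenvalue_def by blast
  have yW: "inW y" using y by (simp add: inW_def)
  have "ip V y y \<noteq> 0" using y(2) ip_zero by blast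
  then have pos: "ip V y y > 0" using ip_nonneg[of y] by simp
  define c where "c = 1 / sqrt (ip V y y)"
  define x where "x = (\<lambda>v. c * y v)"
  have "inW x" unfolding x_def by (rule inW_scale[OF yW])
  moreover have "ip V x x = 1"
  proof -
    have "ip V x x = c * (c * ip V y y)" unfolding x_def by (simp only: ip_scale1 ip_scale2)
    also have "\<dots> = ip V y y / (sqrt (ip V y y))^2" by (simp add: c_def power2_eq_square)
    also have "\<dots> = 1" using pos by simp
    finally show ?thesis .
  qed
  moreover have "\<forall>v\<in>V. adj_apply V E x v = \<mu> * x v"
  proof
    fix v assume "v \<in> V"
    have "adj_apply V E x v = adj_apply V E (\<lambda>u. 0 + c * y u) v" by (simp add: x_def)
    also have "\<dots> = c * adj_apply V E y v" by (simp only: adj_lin) (simp add: adj_apply_def)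
    finally show "adj_apply V E x v = \<mu> * x v" using y(4) \<open>v \<in> V\<close> by (simp add: x_def)
  qed
  ultimately show ?thesis unfolding eigv_def by blast
qed

lemma bf_eig: assumes "eigv y \<nu>" shows "bf x y = \<nu> * ip V x y"
proof -
  have "bf x y = (\<Sum>v\<in>V. x v * (\<nu> * y v))"
    unfolding bf_def ip_def using assms by (intro sum.cong refl) (simp add: eigv_def)
  then show ?thesis by (simp add: ip_def sum_distrib_left algebra_simps)
qed

lemma eig_orth: assumes "eigv x \<mu>" "eigv y \<nu>" "\<mu> \<noteq> \<nu>" shows "ip V x y = 0"
proof -
  have "\<nu> * ip V x y = bf x y" using bf_eig[OF assms(2), of x] by simp
  also have "\<dots> = bf y x" by (rule bf_sym)
  also have "\<dots> = \<mu> * ip V y x" by (rule bf_eig[OF assms(1)])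
  also have "\<dots> = \<mu> * ip V x y" by (simp only: ip_sym[of y x])
  finally have "(\<nu> - \<mu>) * ip V x y = 0" by (simp add: algebra_simps)
  then show ?thesis using assms(3) by simp
qed

lemma ip_sumr: "ip V x (\<lambda>v. \<Sum>\<mu>\<in>F. a \<mu> * f \<mu> v) = (\<Sum>\<mu>\<in>F. a \<mu> * ip V x (f \<mu>))"
proof -
  have "ip V x (\<lambda>v. \<Sum>\<mu>\<in>F. a \<mu> * f \<mu> v) = (\<Sum>v\<in>V. \<Sum>\<mu>\<in>F. x v * (a \<mu> * f \<mu> v))"
    unfolding ip_def by (simp add: sum_distrib_left)
  also have "\<dots> = (\<Sum>\<mu>\<in>F. \<Sum>v\<in>V. a \<mu> * (x v * f \<mu> v))"
    by (subst sum.swap) (simp add: algebra_simps)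
  also have "\<dots> = (\<Sum>\<mu>\<in>F. a \<mu> * ip V x (f \<mu>))"
    unfolding ip_def by (simp add: sum_distrib_left)
  finally show ?thesis .
qed

lemma card_eig_le:
  assumes F: "finite F" "\<And>\<mu>. \<mu> \<in> F \<Longrightarrow> bulk_eigenvalue V E k P \<mu>"
  shows "card F \<le> card V"
proof -
  have "\<forall>\<mu>\<in>F. \<exists>x. eigv x \<mu>" using F(2) bulk_eigv by blast
  then obtain e where e: "\<And>\<mu>. \<mu> \<in> F \<Longrightarrow> eigv (e \<mu>) \<mu>" by metis
  have on: "ip V (e \<mu>) (e \<nu>) = (if \<mu> = \<nu> then 1 else 0)" if "\<mu> \<in> F" "\<nu> \<in> F" for \<mu> \<nu>
    using e[OF that(1)] e[OF that(2)] eig_orth by (auto simp: eigv_def)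
  have bessel: "(\<Sum>\<mu>\<in>F. e \<mu> w * e \<mu> w) \<le> 1" if w: "w \<in> V" for w
  proof -
    define s where "s = (\<Sum>\<mu>\<in>F. e \<mu> w * e \<mu> w)"
    define g where "g = (\<lambda>v. \<Sum>\<mu>\<in>F. e \<mu> w * e \<mu> v)"
    define d where "d = (\<lambda>v. if v = w then 1 else (0::real))"
    have eg: "ip V (e \<nu>) g = e \<nu> w" if "\<nu> \<in> F" for \<nu>
    proof -
      have "ip V (e \<nu>) g = (\<Sum>\<mu>\<in>F. e \<mu> w * ip V (e \<nu>) (e \<mu>))" unfolding g_def by (rule ip_sumr)
      also have "\<dots> = (\<Sum>\<mu>\<in>F. if \<nu> = \<mu> then e \<mu> w else 0)"
        by (intro sum.cong refl) (simp add: on that)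
      also have "\<dots> = e \<nu> w" using F(1) that by simp
      finally show ?thesis .
    qed
    have gg: "ip V g g = s"
    proof -
      have "ip V g g = (\<Sum>\<mu>\<in>F. e \<mu> w * ip V g (e \<mu>))" by (subst (2) g_def) (rule ip_sumr)
      also have "\<dots> = s" unfolding s_def by (intro sum.cong refl) (simp add: ip_sym[of g] eg)
      finally show ?thesis .
    qed
    have dg: "ip V d g = s"
    proof -
      have "ip V d g = (\<Sum>v\<in>V. if v = w then g v else 0)"
        unfolding ip_def d_def by (intro sum.cong refl) simp
      also have "\<dots> = g w" using w finV by simp
      finally show ?thesis by (simp add: g_def s_def)
    qed
    have dd: "ip V d d = 1"
    proof -
      have "ip V d d = (\<Sum>v\<in>V. if v = w then 1 else 0)"
        unfolding ip_def d_def by (intro sum.cong refl) simp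
      also have "\<dots> = 1" using w finV by simp
      finally show ?thesis .
    qed
    have "0 \<le> ip V (\<lambda>v. g v + (-1) * d v) (\<lambda>v. g v + (-1) * d v)" by (rule ip_nonneg)
    also have "\<dots> = ip V g g + 2 * (-1) * ip V d g + (-1)^2 * ip V d d" by (rule ip_expand)
    finally have "0 \<le> s - 2 * s + 1" using gg dg dd by simp
    then show ?thesis unfolding s_def by simp
  qed
  have "real (card F) = (\<Sum>\<mu>\<in>F. ip V (e \<mu>) (e \<mu>))" using on by simp
  also have "\<dots> = (\<Sum>w\<in>V. \<Sum>\<mu>\<in>F. e \<mu> w * e \<mu> w)" unfolding ip_def by (rule sum.swap)
  also have "\<dots> \<le> (\<Sum>w\<in>V. 1)" by (intro sum_mono bessel)
  also have "\<dots> = real (card V)" by simp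
  finally show ?thesis by simp
qed

lemma finite_eig: "finite {\<mu>. bulk_eigenvalue V E k P \<mu>}"
proof (rule ccontr)
  assume "infinite {\<mu>. bulk_eigenvalue V E k P \<mu>}"
  then obtain F where "F \<subseteq> {\<mu>. bulk_eigenvalue V E k P \<mu>}" "finite F" "card F = Suc (card V)"
    using infinite_arbitrarily_large by blast
  with card_eig_le[of F] show False by auto
qed

lemma lambda_bound:
  assumes "card V > k"
  shows "lambda_B V E k P \<ge> 0"
    and "\<And>x. inW x \<Longrightarrow> \<bar>bf x x\<bar> \<le> lambda_B V E k P * ip V x x"
proof -
  obtain M m where Mm: "bulk_eigenvalue V E k P M" "bulk_eigenvalue V E k P m"
     "\<And>x. inW x \<Longrightarrow> m * ip V x x \<le> bf x x \<and> bf x x \<le> M * ip V x x"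
    using extremal[OF assms] by blast
  have eqs: "{\<bar>\<mu>\<bar> | \<mu>. bulk_eigenvalue V E k P \<mu>} = abs ` {\<mu>. bulk_eigenvalue V E k P \<mu>}" by auto
  have fin: "finite {\<bar>\<mu>\<bar> | \<mu>. bulk_eigenvalue V E k P \<mu>}" unfolding eqs using finite_eig by simp
  have LM: "\<bar>M\<bar> \<le> lambda_B V E k P" and Lm: "\<bar>m\<bar> \<le> lambda_B V E k P"
    unfolding lambda_B_def using Mm(1,2) by (auto intro!: Max_ge fin)
  show "lambda_B V E k P \<ge> 0" using LM by linarith
  fix x assume xW: "inW x"
  have ipn: "ip V x x \<ge> 0" by (rule ip_nonneg)
  have "M * ip V x x \<le> lambda_B V E k P * ip V x x"
    using LM ipn by (intro mult_right_mono) auto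
  moreover have "- (m * ip V x x) \<le> lambda_B V E k P * ip V x x"
  proof -
    have "- m \<le> lambda_B V E k P" using Lm by linarith
    then have "(- m) * ip V x x \<le> lambda_B V E k P * ip V x x" using ipn by (rule mult_right_mono)
    then show ?thesis by simp
  qed
  ultimately show "\<bar>bf x x\<bar> \<le> lambda_B V E k P * ip V x x" using Mm(3)[OF xW] by linarith
qed

lemma cs_bound:
  assumes L: "\<And>x. inW x \<Longrightarrow> \<bar>bf x x\<bar> \<le> L * ip V x x"
    and xW: "inW x" and yW: "inW y"
  shows "\<bar>bf x y\<bar> \<le> L * sqrt (ip V x x) * sqrt (ip V y y)"
proof (cases "ip V x x = 0 \<or> ip V y y = 0")
  case True
  then show ?thesis
  proof
    assume "ip V x x = 0"
    then have "bf x y = 0" using ip_zero by (intro bf_zero_left) blast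
    then show ?thesis using \<open>ip V x x = 0\<close> by simp
  next
    assume "ip V y y = 0"
    then have "bf y x = 0" using ip_zero by (intro bf_zero_left) blast
    then show ?thesis using \<open>ip V y y = 0\<close> by (simp add: bf_sym)
  qed
next
  case False
  have px: "ip V x x > 0" and py: "ip V y y > 0" using False ip_nonneg[of x] ip_nonneg[of y] by auto
  define a where "a = 1 / sqrt (ip V x x)"
  define b where "b = 1 / sqrt (ip V y y)"
  define x' where "x' = (\<lambda>v. a * x v)"
  define y' where "y' = (\<lambda>v. b * y v)"
  have x'W: "inW x'" unfolding x'_def by (rule inW_scale[OF xW])
  have y'W: "inW y'" unfolding y'_def by (rule inW_scale[OF yW])
  have nx: "ip V x' x' = 1"
  proof -
    have "ip V x' x' = a * (a * ip V x x)" unfolding x'_def by (simp only: ip_scale1 ip_scale2)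
    also have "\<dots> = ip V x x / (sqrt (ip V x x))^2" by (simp add: a_def power2_eq_square)
    also have "\<dots> = 1" using px by simp
    finally show ?thesis .
  qed
  have ny: "ip V y' y' = 1"
  proof -
    have "ip V y' y' = b * (b * ip V y y)" unfolding y'_def by (simp only: ip_scale1 ip_scale2)
    also have "\<dots> = ip V y y / (sqrt (ip V y y))^2" by (simp add: b_def power2_eq_square)
    also have "\<dots> = 1" using py by simp
    finally show ?thesis .
  qed
  have p1: "\<bar>bf (\<lambda>v. x' v + 1 * y' v) (\<lambda>v. x' v + 1 * y' v)\<bar> \<le> L * ip V (\<lambda>v. x' v + 1 * y' v) (\<lambda>v. x' v + 1 * y' v)"
    by (intro L inW_lin x'W y'W)
  have p2: "\<bar>bf (\<lambda>v. x' v + (-1) * y' v) (\<lambda>v. x' v + (-1) * y' v)\<bar> \<le> L * ip V (\<lambda>v. x' v + (-1) * y' v) (\<lambda>v. x' v + (-1) * y' v)"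
    by (intro L inW_lin x'W y'W)
  have "\<bar>bf y' x'\<bar> \<le> L"
    using p1 p2 nx ny unfolding bf_expand ip_expand by (simp add: abs_le_iff distrib_left right_diff_distrib)
  moreover have "bf y' x' = b * a * bf y x" unfolding x'_def y'_def
    by (simp only: bf_scale1 bf_scale2 mult.assoc)
  ultimately have h: "\<bar>b * a * bf x y\<bar> \<le> L" by (simp add: bf_sym)
  have ab: "b * a > 0" unfolding a_def b_def using px py by simp
  have "\<bar>bf x y\<bar> = (sqrt (ip V x x) * sqrt (ip V y y)) * \<bar>b * a * bf x y\<bar>"
    using px py ab by (simp add: a_def b_def abs_mult field_simps)
  also have "\<dots> \<le> (sqrt (ip V x x) * sqrt (ip V y y)) * L"
    using h px py by (intro mult_left_mono) auto
  finally show ?thesis by (simp add: algebra_simps)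
qed

end



context SR begin

lemma sum_restrictV: "A \<subseteq> V \<Longrightarrow> (\<Sum>v\<in>V. if v \<in> A then f v else 0) = (\<Sum>v\<in>A. f v)"
proof -
  assume "A \<subseteq> V"
  then have "V \<inter> A = A" by blast
  then show ?thesis using sum.inter_restrict[OF finV, of f A] by simp
qed

lemma cell_count: "j < k \<Longrightarrow> (\<Sum>v\<in>P j. if v \<in> B then 1 else (0::real)) = real (card (B \<inter> P j))"
proof -
  assume j: "j < k"
  have "(\<Sum>v\<in>P j. if v \<in> B then 1 else (0::real)) = (\<Sum>v\<in>P j \<inter> B. 1)"
    using sum.inter_restrict[OF finP[OF j], of "\<lambda>_. (1::real)" B] by simp
  also have "\<dots> = real (card (B \<inter> P j))" by (simp add: Int_commute)
  finally show ?thesis .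
qed

lemma cellconst_bf:
  assumes "\<And>j v. j < k \<Longrightarrow> v \<in> P j \<Longrightarrow> x v = a j"
  shows "bf x z = (\<Sum>j<k. a j * (\<Sum>i<k. real (S i j) * (\<Sum>v\<in>P i. z v)))"
proof -
  have "bf x z = (\<Sum>j<k. \<Sum>v\<in>P j. x v * adj_apply V E z v)" unfolding bf_def ip_def by (rule sum_cells)
  also have "\<dots> = (\<Sum>j<k. a j * (\<Sum>v\<in>P j. adj_apply V E z v))"
    by (intro sum.cong refl) (simp add: assms sum_distrib_left)
  also have "\<dots> = (\<Sum>j<k. a j * (\<Sum>i<k. real (S i j) * (\<Sum>v\<in>P i. z v)))"
    by (intro sum.cong refl) (simp add: L1)
  finally show ?thesis .
qed

lemma cellconst_ip:
  assumes "\<And>j v. j < k \<Longrightarrow> v \<in> P j \<Longrightarrow> x v = a j"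
  shows "ip V x z = (\<Sum>j<k. a j * (\<Sum>v\<in>P j. z v))"
proof -
  have "ip V x z = (\<Sum>j<k. \<Sum>v\<in>P j. x v * z v)" unfolding ip_def by (rule sum_cells)
  also have "\<dots> = (\<Sum>j<k. a j * (\<Sum>v\<in>P j. z v))"
    by (intro sum.cong refl) (simp add: assms sum_distrib_left)
  finally show ?thesis .
qed

lemma dc: assumes a: "a < k" and b: "b < k" shows "card (P a) * S a b = card (P b) * S b a"
proof -
  define z where "z = (\<lambda>v. if v \<in> P b then 1 else (0::real))"
  have "(\<Sum>u\<in>P a. adj_apply V E z u) = (\<Sum>u\<in>P a. real (S a b))"
  proof (intro sum.cong refl)
    fix u assume u: "u \<in> P a"
    have "adj_apply V E z u = (\<Sum>v\<in>V. if v \<in> {v \<in> P b. E u v} then 1 else 0)"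
      unfolding adj_apply_def z_def by (intro sum.cong refl) auto
    also have "\<dots> = real (card {v \<in> P b. E u v})"
      by (subst sum_restrictV) (use PV[OF b] in auto)
    also have "\<dots> = real (S a b)" using Sdeg[OF a b u] by simp
    finally show "adj_apply V E z u = real (S a b)" .
  qed
  moreover have "(\<Sum>u\<in>P a. adj_apply V E z u) = (\<Sum>i<k. real (S i a) * (\<Sum>v\<in>P i. z v))"
    by (rule L1[OF a])
  moreover have "(\<Sum>i<k. real (S i a) * (\<Sum>v\<in>P i. z v)) = (\<Sum>i<k. if i = b then real (S b a) * real (card (P b)) else 0)"
  proof (intro sum.cong refl)
    fix i assume i: "i \<in> {..<k}"
    show "real (S i a) * (\<Sum>v\<in>P i. z v) = (if i = b then real (S b a) * real (card (P b)) else 0)"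
    proof (cases "i = b")
      case True then show ?thesis by (simp add: z_def)
    next
      case False
      then have "(\<Sum>v\<in>P i. z v) = 0" unfolding z_def using Pdisj[of i b] i b
        by (intro sum.neutral) auto
      then show ?thesis using False by simp
    qed
  qed
  ultimately have "real (card (P a)) * real (S a b) = real (S b a) * real (card (P b))"
    using b by simp
  then have "real (card (P a) * S a b) = real (card (P b) * S b a)" by (simp add: mult.commute)
  then show ?thesis by (simp only: of_nat_eq_iff)
qed

lemma edge_bf:
  assumes "B \<subseteq> V" "C \<subseteq> V"
  shows "real (edge_count E B C) = bf (\<lambda>v. if v \<in> B then 1 else 0) (\<lambda>v. if v \<in> C then 1 else 0)"
proof -
  have finB: "finite B" and finC: "finite C" using assms finV finite_subset by auto
  have adj: "adj_apply V E (\<lambda>v. if v \<in> C then 1 else 0) u = real (card {v \<in> C. E u v})" for u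
  proof -
    have "adj_apply V E (\<lambda>v. if v \<in> C then 1 else 0) u = (\<Sum>v\<in>V. if v \<in> {v \<in> C. E u v} then 1 else 0)"
      unfolding adj_apply_def by (intro sum.cong refl) auto
    also have "\<dots> = real (card {v \<in> C. E u v})"
      by (subst sum_restrictV) (use assms(2) in auto)
    finally show ?thesis .
  qed
  have "bf (\<lambda>v. if v \<in> B then 1 else 0) (\<lambda>v. if v \<in> C then 1 else 0)
      = (\<Sum>u\<in>V. if u \<in> B then real (card {v \<in> C. E u v}) else 0)"
    unfolding bf_def ip_def adj by (intro sum.cong refl) auto
  also have "\<dots> = (\<Sum>u\<in>B. real (card {v \<in> C. E u v}))" by (rule sum_restrictV[OF assms(1)])
  also have "\<dots> = real (\<Sum>u\<in>B. card {v \<in> C. E u v})" by simp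
  also have "(\<Sum>u\<in>B. card {v \<in> C. E u v}) = card (SIGMA u:B. {v \<in> C. E u v})"
    using finB finC by simp
  also have "(SIGMA u:B. {v \<in> C. E u v}) = {(u, v). u \<in> B \<and> v \<in> C \<and> E u v}" by auto
  finally show ?thesis unfolding edge_count_def by simp
qed

lemma proj_facts:
  assumes "A \<subseteq> V"
    and xA_def: "xA = (\<lambda>v. if v \<in> A then 1 else (0::real))"
    and \<alpha>_def: "\<alpha> = (\<lambda>i. real (card (A \<inter> P i)) / real (card (P i)))"
    and xW_def: "xW = (\<lambda>v. \<Sum>i<k. if v \<in> P i then \<alpha> i else 0)"
    and xp_def: "xp = (\<lambda>v. xA v + (-1) * xW v)"
  shows "\<And>j v. j < k \<Longrightarrow> v \<in> P j \<Longrightarrow> xW v = \<alpha> j"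
    and "inW xp"
    and "xA = (\<lambda>v. xW v + 1 * xp v)"
    and "ip V xp xp = real (card A) - (\<Sum>j<k. \<alpha> j * real (card (A \<inter> P j)))"
proof -
  show cv: "\<And>j v. j < k \<Longrightarrow> v \<in> P j \<Longrightarrow> xW v = \<alpha> j" unfolding xW_def by (rule cellval)
  have out: "xW v = 0" if "v \<notin> V" for v
    unfolding xW_def using that PV by (intro sum.neutral) auto
  have sA: "(\<Sum>v\<in>P j. xA v) = real (card (A \<inter> P j))" if "j < k" for j
    unfolding xA_def by (rule cell_count[OF that])
  have sW: "(\<Sum>v\<in>P j. xW v) = real (card (A \<inter> P j))" if j: "j < k" for j
  proof -
    have "(\<Sum>v\<in>P j. xW v) = (\<Sum>v\<in>P j. \<alpha> j)" using cv[OF j] by (intro sum.cong) auto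
    also have "\<dots> = real (card (P j)) * \<alpha> j" by simp
    also have "\<dots> = real (card (A \<inter> P j))" unfolding \<alpha>_def using cardP[OF j] by simp
    finally show ?thesis .
  qed
  show xpW: "inW xp" unfolding inW_def
  proof (intro conjI allI impI)
    fix v assume "v \<notin> V" then show "xp v = 0" using assms(1) out by (auto simp: xp_def xA_def)
  next
    fix j assume j: "j < k"
    have "(\<Sum>v\<in>P j. xp v) = (\<Sum>v\<in>P j. xA v) - (\<Sum>v\<in>P j. xW v)"
      unfolding xp_def by (simp add: sum_subtractf)
    then show "(\<Sum>v\<in>P j. xp v) = 0" using sA[OF j] sW[OF j] by simp
  qed
  show xAeq: "xA = (\<lambda>v. xW v + 1 * xp v)" unfolding xp_def by auto
  have ipW: "ip V xW z = 0" if "inW z" for z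
  proof -
    have "ip V xW z = (\<Sum>j<k. \<alpha> j * (\<Sum>v\<in>P j. z v))" by (rule cellconst_ip[OF cv])
    also have "\<dots> = 0" using that by (simp add: inW_def)
    finally show ?thesis .
  qed
  have "ip V xp xp = ip V xA xp + (-1) * ip V xW xp" unfolding xp_def[of] by (rule ip_lin1)
  also have "\<dots> = ip V xA xp" using ipW[OF xpW] by simp
  also have "\<dots> = ip V xp xA" by (rule ip_sym)
  also have "\<dots> = ip V xA xA + (-1) * ip V xW xA" unfolding xp_def by (rule ip_lin1)
  also have "ip V xA xA = real (card A)"
  proof -
    have "ip V xA xA = (\<Sum>v\<in>V. if v \<in> A then 1 else 0)" unfolding ip_def xA_def
      by (intro sum.cong refl) auto
    also have "\<dots> = real (card A)" by (subst sum_restrictV[OF assms(1)]) simp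
    finally show ?thesis .
  qed
  also have "ip V xW xA = (\<Sum>j<k. \<alpha> j * real (card (A \<inter> P j)))"
    using cellconst_ip[OF cv, where z = xA] sA by simp
  finally show "ip V xp xp = real (card A) - (\<Sum>j<k. \<alpha> j * real (card (A \<inter> P j)))" by simp
qed

lemma sq_coef: assumes a: "a < k" and b: "b < k"
  shows "sqrt (real (S a b * S b a) / real (card (P a) * card (P b))) = real (S b a) / real (card (P a))"
proof -
  have na: "real (card (P a)) > 0" and nb: "real (card (P b)) > 0" using cardP a b by auto
  have d: "real (card (P a)) * real (S a b) = real (card (P b)) * real (S b a)"
    using dc[OF a b] by (metis of_nat_mult)
  have "real (S a b) * real (S b a) * (real (card (P a)) * real (card (P a)))
      = (real (card (P a)) * real (S a b)) * (real (S b a) * real (card (P a)))" by (simp add: algebra_simps)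
  also have "\<dots> = (real (card (P b)) * real (S b a)) * (real (S b a) * real (card (P a)))" by (simp only: d)
  also have "\<dots> = real (S b a) * real (S b a) * (real (card (P a)) * real (card (P b)))" by (simp add: algebra_simps)
  finally have e: "real (S a b) * real (S b a) * (real (card (P a)) * real (card (P a)))
      = real (S b a) * real (S b a) * (real (card (P a)) * real (card (P b)))" .
  have "real (S a b * S b a) / real (card (P a) * card (P b)) = (real (S b a) / real (card (P a)))^2"
    using na nb e by (simp add: field_simps power2_eq_square)
  then show ?thesis using na by simp
qed

lemma main_SR:
  assumes V: "card V > k" and BV: "B \<subseteq> V" and CV: "C \<subseteq> V"
  shows "\<bar>real (edge_count E B C)
           - (\<Sum>i<k. \<Sum>j<k. sqrt (real (S i j * S j i) / real (card (P i) * card (P j)))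
                 * real (card (B \<inter> P i)) * real (card (C \<inter> P j)))\<bar>
         \<le> lambda_B V E k P * real (card V) *
            sqrt ((real (card B) / real (card V)) *
                  (\<Sum>i<k. (real (card (C \<inter> P i)) / real (card (P i))) *
                          (1 - real (card (C \<inter> P i)) / real (card (P i)))))"
proof -
  define xB where "xB = (\<lambda>v. if v \<in> B then 1 else (0::real))"
  define \<alpha> where "\<alpha> = (\<lambda>i. real (card (B \<inter> P i)) / real (card (P i)))"
  define xW where "xW = (\<lambda>v. \<Sum>i<k. if v \<in> P i then \<alpha> i else 0)"
  define xp where "xp = (\<lambda>v. xB v + (-1) * xW v)"
  define yC where "yC = (\<lambda>v. if v \<in> C then 1 else (0::real))"
  define \<beta> where "\<beta> = (\<lambda>i. real (card (C \<inter> P i)) / real (card (P i)))"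
  define yW where "yW = (\<lambda>v. \<Sum>i<k. if v \<in> P i then \<beta> i else 0)"
  define yp where "yp = (\<lambda>v. yC v + (-1) * yW v)"
  note PB = proj_facts[OF BV xB_def \<alpha>_def xW_def xp_def]
  note PC = proj_facts[OF CV yC_def \<beta>_def yW_def yp_def]
  define L where "L = lambda_B V E k P"
  have L0: "L \<ge> 0" and Lb: "\<And>x. inW x \<Longrightarrow> \<bar>bf x x\<bar> \<le> L * ip V x x"
    using lambda_bound[OF V] by (auto simp: L_def)
  define n where "n = real (card V)"
  have npos: "n > 0" using V unfolding n_def by simp
  define \<Sigma> where "\<Sigma> = (\<Sum>i<k. \<beta> i * (1 - \<beta> i))"
  define main where "main = (\<Sum>i<k. \<Sum>j<k. sqrt (real (S i j * S j i) / real (card (P i) * card (P j)))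
                 * real (card (B \<inter> P i)) * real (card (C \<inter> P j)))"
  have cC: "(\<Sum>v\<in>P j. yC v) = real (card (C \<inter> P j))" if "j < k" for j
    unfolding yC_def by (rule cell_count[OF that])
  have b01: "0 \<le> \<beta> j \<and> \<beta> j \<le> 1" if j: "j < k" for j
  proof -
    have "card (C \<inter> P j) \<le> card (P j)" using finP[OF j] by (intro card_mono) auto
    then show ?thesis unfolding \<beta>_def using cardP[OF j] by (simp add: divide_le_eq_1)
  qed
  have a0: "0 \<le> \<alpha> j" for j unfolding \<alpha>_def by simp
  have e1: "real (edge_count E B C) = bf xB yC" unfolding xB_def yC_def by (rule edge_bf[OF BV CV])
  have e2: "bf xB yC = bf xW yC + 1 * bf xp yC" by (subst PB(3)) (rule bf_lin1)
  have e3: "bf xp yC = bf xp yp"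
  proof -
    have "bf xp yC = bf yC xp" by (rule bf_sym)
    also have "\<dots> = bf yW xp + 1 * bf yp xp" by (subst PC(3)) (rule bf_lin1)
    also have "bf yW xp = 0"
    proof -
      have "bf yW xp = (\<Sum>j<k. \<beta> j * (\<Sum>i<k. real (S i j) * (\<Sum>v\<in>P i. xp v)))"
        by (rule cellconst_bf[OF PC(1)])
      also have "\<dots> = 0" using PB(2) by (simp add: inW_def)
      finally show ?thesis .
    qed
    also have "bf yp xp = bf xp yp" by (rule bf_sym)
    finally show ?thesis by simp
  qed
  have e4: "bf xW yC = main"
  proof -
    have "bf xW yC = (\<Sum>j<k. \<alpha> j * (\<Sum>i<k. real (S i j) * (\<Sum>v\<in>P i. yC v)))"
      by (rule cellconst_bf[OF PB(1)])
    also have "\<dots> = (\<Sum>j<k. \<Sum>i<k. sqrt (real (S j i * S i j) / real (card (P j) * card (P i)))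
                 * real (card (B \<inter> P j)) * real (card (C \<inter> P i)))"
    proof (intro sum.cong refl)
      fix j assume j: "j \<in> {..<k}"
      have "\<alpha> j * (\<Sum>i<k. real (S i j) * (\<Sum>v\<in>P i. yC v))
          = (\<Sum>i<k. \<alpha> j * (real (S i j) * real (card (C \<inter> P i))))"
        by (simp add: cC sum_distrib_left)
      also have "\<dots> = (\<Sum>i<k. sqrt (real (S j i * S i j) / real (card (P j) * card (P i)))
                 * real (card (B \<inter> P j)) * real (card (C \<inter> P i)))"
      proof (intro sum.cong refl)
        fix i assume i: "i \<in> {..<k}"
        show "\<alpha> j * (real (S i j) * real (card (C \<inter> P i))) = sqrt (real (S j i * S i j) / real (card (P j) * card (P i)))
                 * real (card (B \<inter> P j)) * real (card (C \<inter> P i))"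
          using i j by (subst sq_coef) (auto simp: \<alpha>_def)
      qed
      finally show "\<alpha> j * (\<Sum>i<k. real (S i j) * (\<Sum>v\<in>P i. yC v)) = (\<Sum>i<k. sqrt (real (S j i * S i j) / real (card (P j) * card (P i)))
                 * real (card (B \<inter> P j)) * real (card (C \<inter> P i)))" .
    qed
    finally show ?thesis unfolding main_def .
  qed
  have diff: "real (edge_count E B C) - main = bf xp yp" using e1 e2 e3 e4 by simp
  have nx: "ip V xp xp \<le> real (card B)"
  proof -
    have "0 \<le> (\<Sum>j<k. \<alpha> j * real (card (B \<inter> P j)))" using a0 by (intro sum_nonneg) simp
    then show ?thesis using PB(4) by simp
  qed
  have ny: "ip V yp yp \<le> n * \<Sigma>"
  proof -
    have cardC: "real (card C) = (\<Sum>j<k. real (card (C \<inter> P j)))"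
    proof -
      have "real (card C) = (\<Sum>v\<in>V. if v \<in> C then 1 else 0)" by (subst sum_restrictV[OF CV]) simp
      also have "\<dots> = (\<Sum>j<k. \<Sum>v\<in>P j. yC v)" unfolding yC_def by (rule sum_cells)
      also have "\<dots> = (\<Sum>j<k. real (card (C \<inter> P j)))" using cC by simp
      finally show ?thesis .
    qed
    have "ip V yp yp = (\<Sum>j<k. real (card (C \<inter> P j)) - \<beta> j * real (card (C \<inter> P j)))"
      using PC(4) cardC by (simp add: sum_subtractf)
    also have "\<dots> = (\<Sum>j<k. real (card (P j)) * (\<beta> j * (1 - \<beta> j)))"
    proof (intro sum.cong refl)
      fix j assume "j \<in> {..<k}"
      then have "real (card (C \<inter> P j)) = real (card (P j)) * \<beta> j" unfolding \<beta>_def using cardP by simp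
      then show "real (card (C \<inter> P j)) - \<beta> j * real (card (C \<inter> P j)) = real (card (P j)) * (\<beta> j * (1 - \<beta> j))"
        by (simp add: algebra_simps)
    qed
    also have "\<dots> \<le> (\<Sum>j<k. n * (\<beta> j * (1 - \<beta> j)))"
    proof (intro sum_mono mult_right_mono)
      fix j assume j: "j \<in> {..<k}"
      show "real (card (P j)) \<le> n" unfolding n_def using j PV finV by (simp add: card_mono)
      show "0 \<le> \<beta> j * (1 - \<beta> j)" using b01 j by simp
    qed
    also have "\<dots> = n * \<Sigma>" unfolding \<Sigma>_def by (simp add: sum_distrib_left)
    finally show ?thesis .
  qed
  have A: "\<bar>bf xp yp\<bar> \<le> L * sqrt (ip V xp xp) * sqrt (ip V yp yp)"
    by (rule cs_bound[OF Lb PB(2) PC(2)])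
  have Bq: "L * sqrt (ip V xp xp) * sqrt (ip V yp yp) \<le> L * sqrt (real (card B)) * sqrt (n * \<Sigma>)"
    using L0 nx ny ip_nonneg[of xp] ip_nonneg[of yp] by (intro mult_mono mult_left_mono real_sqrt_le_mono) auto
  have Ceq: "sqrt (real (card B)) * sqrt (n * \<Sigma>) = n * sqrt (real (card B) / n * \<Sigma>)"
  proof -
    have "sqrt (real (card B)) * sqrt (n * \<Sigma>) = sqrt (n^2 * (real (card B) / n * \<Sigma>))"
      using npos by (simp add: real_sqrt_mult[symmetric] power2_eq_square field_simps)
    also have "\<dots> = \<bar>n\<bar> * sqrt (real (card B) / n * \<Sigma>)" by (simp only: real_sqrt_mult real_sqrt_abs)
    also have "\<dots> = n * sqrt (real (card B) / n * \<Sigma>)" using npos by simp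
    finally show ?thesis .
  qed
  have D: "L * sqrt (real (card B)) * sqrt (n * \<Sigma>) = L * (n * sqrt (real (card B) / n * \<Sigma>))"
    by (simp only: mult.assoc Ceq)
  have "\<bar>bf xp yp\<bar> \<le> L * (n * sqrt (real (card B) / n * \<Sigma>))" using A Bq D by linarith
  then show ?thesis using diff unfolding main_def L_def n_def \<Sigma>_def \<beta>_def by (simp add: mult.assoc)
qed

end

theorem mainTheorem9:
  fixes V :: "'a set" and E :: "'a \<Rightarrow> 'a \<Rightarrow> bool" and k :: nat
    and P :: "nat \<Rightarrow> 'a set" and S :: "nat \<Rightarrow> nat \<Rightarrow> nat" and B C :: "'a set"
  assumes "simple_graph V E" and "connected_graph V E"
    and "S_regular V E k P S"
    and "card V > k"
    and "B \<subseteq> V" and "C \<subseteq> V"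
  shows "\<bar>real (edge_count E B C)
           - (\<Sum>i<k. \<Sum>j<k. sqrt (real (S i j * S j i) / real (card (P i) * card (P j)))
                 * real (card (B \<inter> P i)) * real (card (C \<inter> P j)))\<bar>
         \<le> lambda_B V E k P * real (card V) *
            sqrt ((real (card B) / real (card V)) *
                  (\<Sum>i<k. (real (card (C \<inter> P i)) / real (card (P i))) *
                          (1 - real (card (C \<inter> P i)) / real (card (P i)))))"
proof -
  interpret SR V E k P S using assms(1,3) by unfold_locales
  show ?thesis by (rule main_SR) (use assms in auto)
qed

end
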